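(* Consider a one-hidden-layer discrete-time LIF-SNN with direct encoding, latency $T$, input dimension $n_{\mathrm{in}}$ and $n_1$ hidden neurons, with arbitrary fixed temporal parameters $u(0)\in\mathbb{R}^{n_1}$, $\beta\in[0,1]$, $\vartheta>0$. For $k\in[n_1]$ let $\mathcal{A}_k$ be the family of parallel hyperplanes corresponding to the $k$-th hidden neuron. Then one can construct a weight matrix $W\in\mathbb{R}^{n_1\times n_{\mathrm{in}}}$ and a bias vector $b\in\mathbb{R}^{n_1}$ such that the families $\mathcal{A}_1,\dots,\mathcal{A}_{n_1}$ are in general position.
   Context: The hidden layer evolves, for input $x\in\mathbb{R}^{n_{\mathrm{in}}}$ and $t\in[T]$, as $s(t)=H(\beta u(t-1)+Wx+b-\vartheta\mathbf{1})$, $u(t)=\beta u(t-1)+Wx+b-\vartheta s(t)$, with $H$ the entrywise Heaviside function. This yields $s_k(t)=H\big(\langle w_k,x\rangle+b_k-g_{t-1}(s_k(1),\dots,s_k(t-1))\big)$, where $w_k$ is the $k$-th row of $W$ and $g_{t-1}(a_1,\dots,a_{t-1})=\frac{-\beta^t u_k(0)+\vartheta(1+\sum_{i=1}^{t-1}\beta^i a_{t-i})}{\sum_{i=0}^{t-1}\beta^i}$ for $(a_1,\dots,a_{t-1})\in\{0,1\}^{t-1}$. The family $\mathcal{A}_k$ consists of the hyperplanes $\{x:\langle w_k,x\rangle+b_k-g_{t-1}(a)=0\}$ for $t\in[T]$ and $a\in\{0,1\}^{t-1}$. A finite set of hyperplanes in $\mathbb{R}^d$ is in general position if the intersection of any $p$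 distinct elements is empty when $p>d$ and a $(d-p)$-dimensional affine subspace when $p\le d$; families $\mathcal{A}_1,\dots,\mathcal{A}_{n_1}$ of parallel hyperplanes are in general position if every choice of one hyperplane from each family forms a set in general position. *)

theory Defs
  imports "HOL-Analysis.Analysis"
begin

definition lif_g :: "real \<Rightarrow> real \<Rightarrow> real \<Rightarrow> nat \<Rightarrow> (nat \<Rightarrow> real) \<Rightarrow> real" where
  "lif_g u0k \<beta> \<theta> t a =
     (- (\<beta> ^ t) * u0k + \<theta> * (1 + (\<Sum>i=1..t-1. \<beta> ^ i * a (t - i))))
     / (\<Sum>i=0..t-1. \<beta> ^ i)"

definition lif_family ::
  "real ^ 'n ^ 'm \<Rightarrow> real ^ 'm \<Rightarrow> real ^ 'm \<Rightarrow> real \<Rightarrow> real \<Rightarrow> nat \<Rightarrow> 'm \<Rightarrow> (real ^ 'n) set set" where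
  "lif_family W b u0 \<beta> \<theta> T k =
     {{x. inner (W $ k) x + b $ k - lif_g (u0 $ k) \<beta> \<theta> t a = 0} | t a.
        t \<in> {1..T} \<and> a \<in> {1..t-1} \<rightarrow> {0, 1}}"

definition hyperplanes_gen_pos :: "('a::euclidean_space) set set \<Rightarrow> bool" where
  "hyperplanes_gen_pos H \<longleftrightarrow>
     (\<forall>S \<subseteq> H. S \<noteq> {} \<longrightarrow>
        (if card S > DIM('a) then \<Inter>S = {}
         else affine (\<Inter>S) \<and> aff_dim (\<Inter>S) = int DIM('a) - int (card S)))"

definition families_gen_pos :: "('k \<Rightarrow> ('a::euclidean_space) set set) \<Rightarrow> 'k set \<Rightarrow> bool" where
  "families_gen_pos A K \<longleftrightarrow>
     (\<forall>h. (\<forall>k\<in>K. h k \<in> A k) \<longrightarrow> hyperplanes_gen_pos (h ` K))"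

end

theory Submission imports Defs begin
lemma hyp_inter:
  fixes w :: "'k \<Rightarrow> 'a::euclidean_space" and c :: "'k \<Rightarrow> real"
  assumes "finite J" "independent (w ` J)" "inj_on w J"
  shows "{x. \<forall>j\<in>J. w j \<bullet> x = c j} \<noteq> {} \<and>
         aff_dim {x. \<forall>j\<in>J. w j \<bullet> x = c j} = int DIM('a) - int (card J)"
  using assms
proof (induction J rule: finite_induct)
  case empty
  then show ?case by simp
next
  case (insert k J)
  define X where "X = {x. \<forall>j\<in>J. w j \<bullet> x = c j}"
  have indJ: "independent (w ` J)" using insert.prems
    by (meson image_mono independent_mono subset_insertI)
  have injJ: "inj_on w J" using insert.prems by auto
  from insert.IH[OF indJ injJ] have IH: "X \<noteq> {}" "aff_dim X = int DIM('a) - int (card J)"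
    by (auto simp: X_def)
  have nk: "w k \<notin> w ` J" using insert.prems insert.hyps by auto
  have nspan: "w k \<notin> span (w ` J)"
    using insert.prems(1) nk by (simp add: independent_insert)
  obtain y z where y: "y \<in> span (w ` J)" and z: "\<And>v. v \<in> span (w ` J) \<Longrightarrow> orthogonal z v"
    and wk: "w k = y + z"
    using orthogonal_subspace_decomp_exists[of "w ` J" "w k"] by metis
  have zJ: "w j \<bullet> z = 0" if "j \<in> J" for j
    using z[of "w j"] that by (simp add: span_base orthogonal_def inner_commute)
  have "z \<noteq> 0" using nspan wk y by auto
  have wz: "w k \<bullet> z = z \<bullet> z"
    using z[OF y] wk by (simp add: orthogonal_def inner_add_left inner_add_right inner_commute)
  hence wz0: "w k \<bullet> z \<noteq> 0" using \<open>z \<noteq> 0\<close> by simp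
  have Xz: "x + t *\<^sub>R z \<in> X" if "x \<in> X" for x t
    using that zJ by (simp add: X_def inner_add_right)
  obtain x0 where x0: "x0 \<in> X" using IH by auto
  define t where "t = (c k - w k \<bullet> x0) / (w k \<bullet> z)"
  have x1: "x0 + t *\<^sub>R z \<in> X \<inter> {x. w k \<bullet> x = c k}"
    using Xz[OF x0] wz0 by (simp add: t_def inner_add_right)
  have ns: "\<not> X \<subseteq> {x. w k \<bullet> x = c k}"
  proof
    assume "X \<subseteq> {x. w k \<bullet> x = c k}"
    hence "x0 + (t + 1) *\<^sub>R z \<in> {x. w k \<bullet> x = c k}" using Xz[OF x0] by blast
    with x1 wz0 show False by (simp add: inner_add_right algebra_simps)
  qed
  have aff: "affine X" unfolding X_def
  proof -
    have "{x. \<forall>j\<in>J. w j \<bullet> x = c j} = \<Inter>((\<lambda>j. {x. w j \<bullet> x = c j}) ` J)" by auto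
    thus "affine {x. \<forall>j\<in>J. w j \<bullet> x = c j}" by (auto intro!: affine_Inter simp: affine_hyperplane)
  qed
  have eq: "{x. \<forall>j\<in>insert k J. w j \<bullet> x = c j} = X \<inter> {x. w k \<bullet> x = c k}"
    by (auto simp: X_def)
  show ?case unfolding eq
    using aff_dim_affine_Int_hyperplane[OF aff, of "w k" "c k"] x1 ns IH insert.hyps by auto
qed

lemma affine_hyps: "affine {x. \<forall>j\<in>J. (w j :: 'a::euclidean_space) \<bullet> x = c j}"
proof -
  have "{x. \<forall>j\<in>J. w j \<bullet> x = c j} = \<Inter>((\<lambda>j. {x. w j \<bullet> x = c j}) ` J)" by auto
  thus ?thesis by (auto intro!: affine_Inter simp: affine_hyperplane)
qed

definition Gset :: "real ^ 'm \<Rightarrow> real \<Rightarrow> real \<Rightarrow> nat \<Rightarrow> 'm \<Rightarrow> real set" where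
  "Gset u0 \<beta> \<theta> T k = {lif_g (u0 $ k) \<beta> \<theta> t a | t a. t \<in> {1..T} \<and> a \<in> {1..t-1} \<rightarrow> {0, 1}}"

lemma lif_g_restrict: "lif_g u \<beta> \<theta> t a = lif_g u \<beta> \<theta> t (restrict a {1..t-1})"
  unfolding lif_g_def by (intro arg_cong2[where f="(/)"] refl arg_cong2[where f="(+)"]
      arg_cong2[where f="(*)"] sum.cong) auto

lemma Gset_finite: "finite (Gset u0 \<beta> \<theta> T k)"
proof -
  have "Gset u0 \<beta> \<theta> T k \<subseteq> (\<lambda>(t,a). lif_g (u0 $ k) \<beta> \<theta> t a) `
          (SIGMA t:{1..T}. PiE {1..t-1} (\<lambda>_. {0,1}))"
  proof
    fix g assume "g \<in> Gset u0 \<beta> \<theta> T k"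
    then obtain t a where g: "g = lif_g (u0 $ k) \<beta> \<theta> t a" "t \<in> {1..T}" "a \<in> {1..t-1} \<rightarrow> {0, 1}"
      unfolding Gset_def by blast
    hence "g = lif_g (u0 $ k) \<beta> \<theta> t (restrict a {1..t-1})" using lif_g_restrict by metis
    moreover have "(t, restrict a {1..t-1}) \<in> (SIGMA t:{1..T}. PiE {1..t-1} (\<lambda>_. {0,1}))"
      using g by auto
    ultimately show "g \<in> (\<lambda>(t,a). lif_g (u0 $ k) \<beta> \<theta> t a) ` (SIGMA t:{1..T}. PiE {1..t-1} (\<lambda>_. {0,1}))"
      by force
  qed
  moreover have "finite (SIGMA t:{1..T}. PiE {1..t-1} (\<lambda>_. {0::real,1}))"
    by (intro finite_SigmaI finite_PiE) auto
  ultimately show ?thesis by (meson finite_imageI finite_subset)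
qed

lemma fam_eq: "lif_family W b u0 \<beta> \<theta> T k =
   (\<lambda>g. {x. W $ k \<bullet> x = g - b $ k}) ` Gset u0 \<beta> \<theta> T k"
  unfolding lif_family_def Gset_def by (auto simp: algebra_simps)

definition inv_good :: "real ^ 'n ^ 'm \<Rightarrow> real ^ 'm \<Rightarrow> ('m \<Rightarrow> real set) \<Rightarrow> 'm set \<Rightarrow> bool" where
  "inv_good W b G K \<longleftrightarrow>
    (\<forall>J\<subseteq>K. card J \<le> CARD('n) \<longrightarrow> independent ((\<lambda>j. W $ j) ` J) \<and> inj_on (\<lambda>j. W $ j) J) \<and>
    (\<forall>J\<subseteq>K. card J = Suc CARD('n) \<longrightarrow> (\<forall>c. (\<forall>j\<in>J. c j \<in> G j) \<longrightarrow>
        {x. \<forall>j\<in>J. W $ j \<bullet> x = c j - b $ j} = {}))"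

lemma inv_imp_gen:
  fixes W :: "real ^ 'n ^ 'm::finite"
  assumes K: "finite K" and inv: "inv_good W b (Gset u0 \<beta> \<theta> T) K"
  shows "families_gen_pos (lif_family W b u0 \<beta> \<theta> T) K"
  unfolding families_gen_pos_def
proof (intro allI impI)
  fix h assume h: "\<forall>k\<in>K. h k \<in> lif_family W b u0 \<beta> \<theta> T k"
  have "\<forall>k\<in>K. \<exists>g. g \<in> Gset u0 \<beta> \<theta> T k \<and> h k = {x. W $ k \<bullet> x = g - b $ k}"
    using h unfolding fam_eq by blast
  then obtain g where g: "\<And>k. k \<in> K \<Longrightarrow> g k \<in> Gset u0 \<beta> \<theta> T k \<and> h k = {x. W $ k \<bullet> x = g k - b $ k}"
    by metis
  show "hyperplanes_gen_pos (h ` K)"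
    unfolding hyperplanes_gen_pos_def
  proof (intro allI impI)
    fix S assume S: "S \<subseteq> h ` K" "S \<noteq> {}"
    then obtain J where J: "J \<subseteq> K" "inj_on h J" "S = h ` J" by (meson subset_image_inj)
    have fJ: "finite J" using J K finite_subset by blast
    have cS: "card S = card J" using J card_image by blast
    have IS: "\<Inter>S = {x. \<forall>j\<in>J. W $ j \<bullet> x = g j - b $ j}"
      using J g by auto
    show "if DIM(real ^ 'n) < card S then \<Inter> S = {}
          else affine (\<Inter> S) \<and> aff_dim (\<Inter> S) = int DIM(real ^ 'n) - int (card S)"
    proof (cases "CARD('n) < card J")
      case True
      then obtain J' where J': "J' \<subseteq> J" "card J' = Suc CARD('n)"
        by (metis Suc_leI obtain_subset_with_card_n)
      have "{x. \<forall>j\<in>J'. W $ j \<bullet> x = g j - b $ j} = {}"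
        using inv J' J g unfolding inv_good_def by (meson subset_trans subsetD)
      hence "\<Inter>S = {}" unfolding IS using J' by blast
      thus ?thesis using True cS by simp
    next
      case False
      hence ind: "independent ((\<lambda>j. W $ j) ` J)" "inj_on (\<lambda>j. W $ j) J"
        using inv J unfolding inv_good_def by auto
      from hyp_inter[OF fJ ind, of "\<lambda>j. g j - b $ j"]
      show ?thesis using False cS IS affine_hyps by simp
    qed
  qed
qed

lemma inv_step:
  fixes W :: "real ^ 'n ^ 'm" and G :: "'m \<Rightarrow> real set"
  assumes K: "finite K" and kK: "k \<notin> K" and inv: "inv_good W b G K"
    and fin: "\<And>j. finite (G j)"
  shows "\<exists>(W' :: real ^ 'n ^ 'm) b'. inv_good W' b' G (insert k K)"
proof -
  let ?row = "\<lambda>j. W $ j"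
  let ?F = "{span (?row ` J0) | J0. J0 \<subseteq> K \<and> card J0 < CARD('n)}"
  have "?F \<subseteq> (\<lambda>J0. span (?row ` J0)) ` Pow K" by auto
  hence finF: "finite ?F" using K by (meson finite_Pow_iff finite_imageI finite_subset)
  have negU: "negligible (\<Union>?F)"
  proof (rule negligible_Union[OF finF])
    fix T assume "T \<in> ?F"
    then obtain J0 where J0: "J0 \<subseteq> K" "card J0 < CARD('n)" "T = span (?row ` J0)" by blast
    have "dim T \<le> card (?row ` J0)" unfolding J0(3) dim_span
      using J0 K by (meson dim_le_card finite_imageI finite_subset span_superset)
    also have "\<dots> \<le> card J0" using card_image_le J0 K finite_subset by blast
    finally show "negligible T" using J0 by (intro negligible_lowdim) simp
  qed
  have "\<exists>w. w \<notin> \<Union>?F"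
  proof (rule ccontr)
    assume "\<not> ?thesis"
    hence "\<Union>?F = UNIV" by blast
    thus False using negU by simp
  qed
  then obtain w where w: "w \<notin> \<Union>?F" by blast
  define W' where "W' = (\<chi> i. if i = k then w else W $ i)"
  have W'K: "W' $ j = W $ j" if "j \<in> K" for j using that kK by (auto simp: W'_def)
  have W'k: "W' $ k = w" by (simp add: W'_def)
  define Sg where "Sg = (SIGMA J0:{J0. J0 \<subseteq> K \<and> card J0 = CARD('n)}. PiE J0 (\<lambda>j. (\<lambda>g. g - b $ j) ` G j))"
  define F2 where "F2 = (\<lambda>(J0, c). {x. \<forall>j\<in>J0. W $ j \<bullet> x = c j}) ` Sg"
  let ?P = "\<Union>F2"
  have finP: "finite ?P"
  proof (rule finite_Union)
    have "Sg \<subseteq> (SIGMA J0:Pow K. PiE J0 (\<lambda>j. (\<lambda>g. g - b $ j) ` G j))"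
      unfolding Sg_def by auto
    moreover have "finite (SIGMA J0:Pow K. PiE J0 (\<lambda>j. (\<lambda>g. g - b $ j) ` G j))"
      using K fin by (intro finite_SigmaI finite_PiE) (auto intro: finite_subset)
    ultimately show "finite F2" unfolding F2_def
      by (meson finite_imageI finite_subset)
  next
    fix M assume "M \<in> F2"
    then obtain J0 c where J0: "J0 \<subseteq> K" "card J0 = CARD('n)" "M = {x. \<forall>j\<in>J0. W $ j \<bullet> x = c j}"
      unfolding F2_def Sg_def by auto
    have ind: "independent (?row ` J0)" "inj_on ?row J0" using inv J0 unfolding inv_good_def by auto
    have "finite J0" using J0 K finite_subset by blast
    from hyp_inter[OF this ind, of c] J0 have "aff_dim M = 0" by simp
    then show "finite M" using aff_dim_eq_0 by (metis finite.emptyI finite.insertI)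
  qed
  let ?Bad = "(\<lambda>(g, x). g - w \<bullet> x) ` (G k \<times> ?P)"
  have "finite ?Bad" using finP fin by blast
  then obtain bk where bk: "bk \<notin> ?Bad" using ex_new_if_finite[OF infinite_UNIV_char_0] by blast
  define b' where "b' = (\<chi> i. if i = k then bk else b $ i)"
  have b'K: "b' $ j = b $ j" if "j \<in> K" for j using that kK by (auto simp: b'_def)
  have b'k: "b' $ k = bk" by (simp add: b'_def)
  have inv1: "independent ((\<lambda>j. W' $ j) ` J) \<and> inj_on (\<lambda>j. W' $ j) J"
    if J: "J \<subseteq> insert k K" "card J \<le> CARD('n)" for J
  proof (cases "k \<in> J")
    case False
    hence "J \<subseteq> K" using J by auto
    moreover have "(\<lambda>j. W' $ j) ` J = ?row ` J" "inj_on (\<lambda>j. W' $ j) J = inj_on ?row J"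
      using W'K calculation by (auto intro!: image_cong inj_on_cong)
    ultimately show ?thesis using inv J unfolding inv_good_def by auto
  next
    case True
    define J0 where "J0 = J - {k}"
    have J0K: "J0 \<subseteq> K" using J by (auto simp: J0_def)
    have fJ: "finite J" using J K finite_subset by blast
    have "card J > 0" using True fJ by (auto simp: card_gt_0_iff)
    moreover have "CARD('n) > 0" by simp
    ultimately have cJ0: "card J0 < CARD('n)" using J True fJ by (simp add: J0_def card_Diff_singleton)
    have ind0: "independent (?row ` J0)" "inj_on ?row J0" using inv J0K cJ0 unfolding inv_good_def by auto
    have wn: "w \<notin> span (?row ` J0)" using w J0K cJ0 by blast
    have Jeq: "J = insert k J0" using True by (auto simp: J0_def)
    have img: "(\<lambda>j. W' $ j) ` J = insert w (?row ` J0)"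
    proof -
      have "(\<lambda>j. W' $ j) ` J0 = ?row ` J0" using W'K J0K by (auto intro!: image_cong)
      thus ?thesis using W'k by (simp add: Jeq)
    qed
    have "independent (insert w (?row ` J0))" using independent_insertI[OF wn ind0(1)] .
    moreover have "inj_on (\<lambda>j. W' $ j) J"
    proof -
      have "inj_on (\<lambda>j. W' $ j) J0" using ind0(2) W'K J0K unfolding inj_on_def by (metis subsetD)
      moreover have "W' $ k \<notin> (\<lambda>j. W' $ j) ` J0"
      proof
        assume "W' $ k \<in> (\<lambda>j. W' $ j) ` J0"
        then obtain j where j: "j \<in> J0" "W' $ k = W' $ j" by blast
        hence "w = W $ j" using W'k W'K J0K by auto
        hence "w \<in> ?row ` J0" using j(1) by blast
        thus False using wn span_base by blast
      qed
      moreover have "k \<notin> J0" by (simp add: J0_def)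
      ultimately show ?thesis by (simp add: Jeq)
    qed
    ultimately show ?thesis using img by simp
  qed
  have inv2: "{x. \<forall>j\<in>J. W' $ j \<bullet> x = c j - b' $ j} = {}"
    if J: "J \<subseteq> insert k K" "card J = Suc CARD('n)" and c: "\<forall>j\<in>J. c j \<in> G j" for J c
  proof (cases "k \<in> J")
    case False
    hence JK: "J \<subseteq> K" using J by auto
    have eqs: "\<And>j. j \<in> J \<Longrightarrow> W' $ j = W $ j" "\<And>j. j \<in> J \<Longrightarrow> b' $ j = b $ j"
      using JK W'K b'K by auto
    have "{x. \<forall>j\<in>J. W' $ j \<bullet> x = c j - b' $ j} = {x. \<forall>j\<in>J. W $ j \<bullet> x = c j - b $ j}"
      by (simp add: eqs)
    also have "\<dots> = {}" using inv JK J c unfolding inv_good_def by auto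
    finally show ?thesis .
  next
    case True
    define J0 where "J0 = J - {k}"
    have J0K: "J0 \<subseteq> K" using J by (auto simp: J0_def)
    have fJ: "finite J" using J K finite_subset by blast
    have cJ0: "card J0 = CARD('n)" using J True fJ by (simp add: J0_def card_Diff_singleton)
    show ?thesis
    proof (rule ccontr)
      assume "{x. \<forall>j\<in>J. W' $ j \<bullet> x = c j - b' $ j} \<noteq> {}"
      then obtain x where x: "\<forall>j\<in>J. W' $ j \<bullet> x = c j - b' $ j" by blast
      let ?c = "restrict (\<lambda>j. c j - b $ j) J0"
      have "?c \<in> PiE J0 (\<lambda>j. (\<lambda>g. g - b $ j) ` G j)" using c by (auto simp: J0_def)
      moreover have "x \<in> {x. \<forall>j\<in>J0. W $ j \<bullet> x = ?c j}"
      proof (clarsimp)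
        fix j assume j: "j \<in> J0"
        hence "j \<in> K" "j \<in> J" using J0K by (auto simp: J0_def)
        thus "W $ j \<bullet> x = c j - b $ j" using x W'K b'K by metis
      qed
      ultimately have "(J0, ?c) \<in> Sg" "x \<in> {x. \<forall>j\<in>J0. W $ j \<bullet> x = ?c j}"
        using J0K cJ0 unfolding Sg_def by auto
      hence "x \<in> ?P" unfolding F2_def by (intro UnionI[OF imageI]) auto
      moreover have "w \<bullet> x = c k - bk" using x True W'k b'k by auto
      ultimately have "bk \<in> ?Bad" using c True
        by (intro image_eqI[where x="(c k, x)"]) auto
      thus False using bk by blast
    qed
  qed
  have "inv_good W' b' G (insert k K)" unfolding inv_good_def using inv1 inv2 by blast
  thus ?thesis by blast
qed

lemma inv_exists:
  fixes G :: "'m::finite \<Rightarrow> real set"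
  assumes "finite K" "\<And>j. finite (G j)"
  shows "\<exists>(W :: real ^ 'n ^ 'm) b. inv_good W b G K"
  using assms(1)
proof (induction K rule: finite_induct)
  case empty
  show ?case by (auto simp: inv_good_def independent_empty)
next
  case (insert k K)
  then obtain W :: "real ^ 'n ^ 'm" and b where "inv_good W b G K" by blast
  thus ?case using inv_step[of K k W b G] insert.hyps assms(2) by blast
qed

theorem lemmaB17:
  fixes T :: nat and u0 :: "real ^ 'm::finite" and \<beta> \<theta> :: real
  assumes "0 \<le> \<beta>" and "\<beta> \<le> 1" and "\<theta> > 0"
  shows "\<exists>(W :: real ^ 'n::finite ^ 'm) (b :: real ^ 'm).
           families_gen_pos (lif_family W b u0 \<beta> \<theta> T) UNIV"
proof -
  obtain W :: "real ^ 'n ^ 'm" and b where "inv_good W b (Gset u0 \<beta> \<theta> T) UNIV"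
    using inv_exists[of UNIV "Gset u0 \<beta> \<theta> T"] Gset_finite finite_class.finite_UNIV by blast
  thus ?thesis using inv_imp_gen[of UNIV] finite_class.finite_UNIV by blast
qed

end
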